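(* Let $G$ be an innately transitive permutation group on a finite set $\Omega$ with a nonabelian plinth $M=T_1\times\cdots\times T_k$, where $T_1,\ldots,T_k$ are the (pairwise isomorphic, nonabelian) simple normal subgroups of $M$, and let $\sigma_i:M\to T_i$ be the $i$-th projection. Let $\omega\in\Omega$ and let $\{K_1,\ldots,K_\ell\}$ be a Cartesian system of subgroups in $M$ with respect to $\omega$. Then for all $i\in\{1,\ldots,k\}$ and all $j\in\{1,\ldots,\ell\}$, $$T_i=\sigma_i(K_j)\Bigl(\bigcap_{m\ne j}\sigma_i(K_m)\Bigr).$$
   Context: A finite permutation group is innately transitive if it has a transitive minimal normal subgroup, called a plinth. If $G$ is innately transitive on $\Omega$ with plinth $M$ and $\omega\in\Omega$, a Cartesian system of subgroups in $M$ with respect to $\omega$ is a set $\{K_1,\ldots,K_\ell\}$ of subgroups of $M$ which is invariant under conjugation by $G_\omega$ and satisfies (i) $\bigcap_{i=1}^\ell K_i=M_\omega$ and (ii) $K_i\bigl(\bigcap_{j\ne i}K_j\bigr)=M$ for all $i$ (an empty intersection being $M$). *)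

theory Defs
  imports "HOL-Algebra.Algebra"
begin

abbreviation subgrp :: "'a set \<Rightarrow> ('a \<Rightarrow> 'a) set \<Rightarrow> ('a \<Rightarrow> 'a) monoid" where
  "subgrp \<Omega> H \<equiv> (BijGroup \<Omega>)\<lparr>carrier := H\<rparr>"

definition perm_group :: "'a set \<Rightarrow> ('a \<Rightarrow> 'a) set \<Rightarrow> bool" where
  "perm_group \<Omega> G \<longleftrightarrow> subgroup G (BijGroup \<Omega>)"

definition minimal_normal :: "('b, 'c) monoid_scheme \<Rightarrow> 'b set \<Rightarrow> bool" where
  "minimal_normal Gr N \<longleftrightarrow> N \<lhd> Gr \<and> N \<noteq> {\<one>\<^bsub>Gr\<^esub>} \<and>
     (\<forall>L. L \<lhd> Gr \<and> L \<subseteq> N \<longrightarrow> L = {\<one>\<^bsub>Gr\<^esub>} \<or> L = N)"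

definition transitive_on :: "'a set \<Rightarrow> ('a \<Rightarrow> 'a) set \<Rightarrow> bool" where
  "transitive_on \<Omega> M \<longleftrightarrow> (\<forall>\<alpha>\<in>\<Omega>. \<forall>\<beta>\<in>\<Omega>. \<exists>m\<in>M. m \<alpha> = \<beta>)"

definition plinth :: "'a set \<Rightarrow> ('a \<Rightarrow> 'a) set \<Rightarrow> ('a \<Rightarrow> 'a) set \<Rightarrow> bool" where
  "plinth \<Omega> G M \<longleftrightarrow> minimal_normal (subgrp \<Omega> G) M \<and> transitive_on \<Omega> M"

definition innately_transitive :: "'a set \<Rightarrow> ('a \<Rightarrow> 'a) set \<Rightarrow> bool" where
  "innately_transitive \<Omega> G \<longleftrightarrow> perm_group \<Omega> G \<and> (\<exists>M. plinth \<Omega> G M)"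

definition stab :: "('a \<Rightarrow> 'a) set \<Rightarrow> 'a \<Rightarrow> ('a \<Rightarrow> 'a) set" where
  "stab H \<omega> = {h \<in> H. h \<omega> = \<omega>}"

text \<open>Cartesian system of subgroups in M with respect to omega (a finite set of subgroups;
  intersections are taken inside M, so the empty intersection is M).\<close>
definition cartesian_system ::
  "'a set \<Rightarrow> ('a \<Rightarrow> 'a) set \<Rightarrow> ('a \<Rightarrow> 'a) set \<Rightarrow> 'a \<Rightarrow> ('a \<Rightarrow> 'a) set set \<Rightarrow> bool" where
  "cartesian_system \<Omega> G M \<omega> \<K> \<longleftrightarrow>
     finite \<K> \<and>
     (\<forall>K\<in>\<K>. subgroup K (subgrp \<Omega> M)) \<and>
     (\<forall>g\<in>stab G \<omega>. \<forall>K\<in>\<K>.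
        (\<lambda>x. g \<otimes>\<^bsub>BijGroup \<Omega>\<^esub> x \<otimes>\<^bsub>BijGroup \<Omega>\<^esub> inv\<^bsub>BijGroup \<Omega>\<^esub> g) ` K \<in> \<K>) \<and>
     M \<inter> \<Inter>\<K> = stab M \<omega> \<and>
     (\<forall>K\<in>\<K>. K <#>\<^bsub>BijGroup \<Omega>\<^esub> (M \<inter> \<Inter>(\<K> - {K})) = M)"

definition internal_direct_product :: "('b, 'c) monoid_scheme \<Rightarrow> ('i \<Rightarrow> 'b set) \<Rightarrow> 'i set \<Rightarrow> bool" where
  "internal_direct_product H T I \<longleftrightarrow>
     (\<forall>i\<in>I. T i \<lhd> H) \<and>
     generate H (\<Union>i\<in>I. T i) = carrier H \<and>
     (\<forall>i\<in>I. T i \<inter> generate H (\<Union>j\<in>I - {i}. T j) = {\<one>\<^bsub>H\<^esub>})"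

definition proj :: "('b, 'c) monoid_scheme \<Rightarrow> ('i \<Rightarrow> 'b set) \<Rightarrow> 'i set \<Rightarrow> 'i \<Rightarrow> 'b \<Rightarrow> 'b" where
  "proj H T I i x = (THE t. t \<in> T i \<and> (\<exists>s\<in>generate H (\<Union>j\<in>I - {i}. T j). x = t \<otimes>\<^bsub>H\<^esub> s))"

end

theory Submission
  imports Defs
begin

context group begin

lemma idp_commute:
  assumes idp: "internal_direct_product G T I" and i: "i \<in> I"
    and t: "t \<in> T i" and s: "s \<in> generate G (\<Union>j\<in>I - {i}. T j)"
  shows "t \<otimes> s = s \<otimes> t"
proof -
  let ?N = "generate G (\<Union>j\<in>I - {i}. T j)"
  have Tn: "\<And>j. j \<in> I \<Longrightarrow> T j \<lhd> G" using idp unfolding internal_direct_product_def by blast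
  have int: "T i \<inter> ?N = {\<one>}" using idp i unfolding internal_direct_product_def by blast
  have Tsub: "\<And>j. j \<in> I \<Longrightarrow> T j \<subseteq> carrier G"
    using Tn normal_imp_subgroup subgroup.subset by blast
  define C where "C = {x \<in> carrier G. \<forall>t\<in>T i. x \<otimes> t = t \<otimes> x}"
  have Csub: "subgroup C G"
  proof (rule subgroupI)
    show "C \<subseteq> carrier G" unfolding C_def by auto
    show "C \<noteq> {}" unfolding C_def using Tsub[OF i] by (auto intro!: exI[of _ \<one>] simp: subset_iff)
  next
    fix x assume x: "x \<in> C"
    show "inv x \<in> C" unfolding C_def
    proof (safe)
      show "inv x \<in> carrier G" using x C_def by auto
      fix t assume t: "t \<in> T i"
      have tc: "t \<in> carrier G" using t Tsub[OF i] by auto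
      have xc: "x \<in> carrier G" using x C_def by auto
      have "x \<otimes> t = t \<otimes> x" using x t C_def by auto
      have "inv x \<otimes> t = inv x \<otimes> (t \<otimes> x) \<otimes> inv x" using xc tc by (simp add: m_assoc)
      also have "\<dots> = inv x \<otimes> (x \<otimes> t) \<otimes> inv x" using \<open>x \<otimes> t = t \<otimes> x\<close> by simp
      also have "\<dots> = t \<otimes> inv x" using xc tc by (simp add: m_assoc[symmetric])
      finally show "inv x \<otimes> t = t \<otimes> inv x" .
    qed
  next
    fix x y assume x: "x \<in> C" and y: "y \<in> C"
    show "x \<otimes> y \<in> C" unfolding C_def
    proof (safe)
      show "x \<otimes> y \<in> carrier G" using x y C_def by auto
      fix t assume t: "t \<in> T i"
      have tc: "t \<in> carrier G" using t Tsub[OF i] by auto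
      have xc: "x \<in> carrier G" and yc: "y \<in> carrier G" using x y C_def by auto
      have "x \<otimes> y \<otimes> t = x \<otimes> (t \<otimes> y)" using y t C_def xc yc tc by (simp add: m_assoc)
      also have "\<dots> = t \<otimes> x \<otimes> y" using x t C_def xc yc tc by (simp add: m_assoc[symmetric])
      finally show "x \<otimes> y \<otimes> t = t \<otimes> (x \<otimes> y)" using xc yc tc by (simp add: m_assoc)
    qed
  qed
  have "(\<Union>j\<in>I - {i}. T j) \<subseteq> C"
  proof
    fix x assume "x \<in> (\<Union>j\<in>I - {i}. T j)"
    then obtain j where j: "j \<in> I" "j \<noteq> i" and x: "x \<in> T j" by auto
    have xc: "x \<in> carrier G" using Tsub[OF j(1)] x by auto
    have "\<forall>t\<in>T i. x \<otimes> t = t \<otimes> x"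
    proof
      fix t assume t: "t \<in> T i"
      have tc: "t \<in> carrier G" using t Tsub[OF i] by auto
      define c where "c = x \<otimes> t \<otimes> inv x \<otimes> inv t"
      have c1: "c \<in> T i"
      proof -
        have "x \<otimes> t \<otimes> inv x \<in> T i" using normal.inv_op_closed2[OF Tn[OF i] xc t] .
        then show ?thesis unfolding c_def
          using Tn[OF i] normal_imp_subgroup subgroup.m_closed subgroup.m_inv_closed t by metis
      qed
      have c2: "c \<in> ?N"
      proof -
        have "t \<otimes> inv x \<otimes> inv t \<in> T j"
          using normal.inv_op_closed2[OF Tn[OF j(1)] tc] x Tn[OF j(1)] normal_imp_subgroup subgroup.m_inv_closed by metis
        then have "x \<otimes> (t \<otimes> inv x \<otimes> inv t) \<in> T j"
          using x Tn[OF j(1)] normal_imp_subgroup subgroup.m_closed by metis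
        then have "c \<in> T j" unfolding c_def using xc tc by (simp add: m_assoc)
        then show ?thesis using j by (auto intro: generate.incl)
      qed
      have "c = \<one>" using c1 c2 int by auto
      then have "x \<otimes> t \<otimes> inv x \<otimes> inv t \<otimes> t \<otimes> x = t \<otimes> x" unfolding c_def using xc tc by simp
      then show "x \<otimes> t = t \<otimes> x" using xc tc by (simp add: m_assoc)
    qed
    then show "x \<in> C" using xc C_def by auto
  qed
  then have "?N \<subseteq> C" using generate_subgroup_incl Csub by blast
  then show ?thesis using s t C_def by auto
qed


lemma idp_decomp:
  assumes idp: "internal_direct_product G T I" and i: "i \<in> I" and x: "x \<in> carrier G"
  shows "\<exists>t\<in>T i. \<exists>s\<in>generate G (\<Union>j\<in>I - {i}. T j). x = t \<otimes> s"
proof -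
  let ?N = "generate G (\<Union>j\<in>I - {i}. T j)"
  have Tn: "\<And>j. j \<in> I \<Longrightarrow> T j \<lhd> G" using idp unfolding internal_direct_product_def by blast
  have gen: "generate G (\<Union>j\<in>I. T j) = carrier G" using idp unfolding internal_direct_product_def by blast
  have Tsub: "\<And>j. j \<in> I \<Longrightarrow> T j \<subseteq> carrier G"
    using Tn normal_imp_subgroup subgroup.subset by blast
  have Nsub: "subgroup ?N G" using Tsub by (intro generate_is_subgroup) auto
  have P: "subgroup (T i <#> ?N) G"
    using second_isomorphism_grp.normal_set_mult_subgroup[of "T i" G ?N] Tn[OF i] Nsub
    unfolding second_isomorphism_grp_def second_isomorphism_grp_axioms_def by blast
  have "(\<Union>j\<in>I. T j) \<subseteq> T i <#> ?N"
  proof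
    fix y assume "y \<in> (\<Union>j\<in>I. T j)"
    then obtain j where j: "j \<in> I" "y \<in> T j" by auto
    have yc: "y \<in> carrier G" using Tsub j by auto
    show "y \<in> T i <#> ?N"
    proof (cases "j = i")
      case True
      then have "y = y \<otimes> \<one>" "\<one> \<in> ?N" using yc by (auto intro: generate.one)
      then show ?thesis using j True unfolding set_mult_def by blast
    next
      case False
      then have "y = \<one> \<otimes> y" "y \<in> ?N" "\<one> \<in> T i" using yc j Tn[OF i] normal_imp_subgroup subgroup.one_closed
        by (auto intro: generate.incl)
      then show ?thesis using j unfolding set_mult_def by blast
    qed
  qed
  then have "carrier G \<subseteq> T i <#> ?N" using generate_subgroup_incl[OF _ P] gen by metis
  then show ?thesis using x unfolding set_mult_def by blast
qed

lemma proj_eq: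
  assumes idp: "internal_direct_product G T I" and i: "i \<in> I"
    and t: "t \<in> T i" and s: "s \<in> generate G (\<Union>j\<in>I - {i}. T j)"
  shows "proj G T I i (t \<otimes> s) = t"
  unfolding proj_def
proof (rule the_equality)
  show "t \<in> T i \<and> (\<exists>s'\<in>generate G (\<Union>j\<in>I - {i}. T j). t \<otimes> s = t \<otimes> s')" using t s by blast
next
  let ?N = "generate G (\<Union>j\<in>I - {i}. T j)"
  have Tn: "\<And>j. j \<in> I \<Longrightarrow> T j \<lhd> G" using idp unfolding internal_direct_product_def by blast
  have int: "T i \<inter> ?N = {\<one>}" using idp i unfolding internal_direct_product_def by blast
  have Tsub: "\<And>j. j \<in> I \<Longrightarrow> T j \<subseteq> carrier G"
    using Tn normal_imp_subgroup subgroup.subset by blast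
  have Nsub: "subgroup ?N G" using Tsub by (intro generate_is_subgroup) auto
  have TiS: "subgroup (T i) G" using Tn[OF i] normal_imp_subgroup by blast
  fix t' assume "t' \<in> T i \<and> (\<exists>s'\<in>?N. t \<otimes> s = t' \<otimes> s')"
  then obtain s' where t': "t' \<in> T i" and s': "s' \<in> ?N" and eq: "t \<otimes> s = t' \<otimes> s'" by blast
  have tc: "t \<in> carrier G" "t' \<in> carrier G" using t t' Tsub[OF i] by auto
  have sc: "s \<in> carrier G" "s' \<in> carrier G" using s s' Nsub subgroup.subset by blast+
  have "inv t' \<otimes> t = s' \<otimes> inv s"
  proof -
    have "inv t' \<otimes> t = inv t' \<otimes> (t \<otimes> s) \<otimes> inv s" using tc sc by (simp add: m_assoc)
    also have "\<dots> = inv t' \<otimes> (t' \<otimes> s') \<otimes> inv s" using eq by simp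
    also have "\<dots> = s' \<otimes> inv s" using tc sc by (simp add: m_assoc[symmetric])
    finally show ?thesis .
  qed
  moreover have "inv t' \<otimes> t \<in> T i" using TiS t t' subgroup.m_closed subgroup.m_inv_closed by metis
  moreover have "s' \<otimes> inv s \<in> ?N" using Nsub s s' subgroup.m_closed subgroup.m_inv_closed by metis
  ultimately have "inv t' \<otimes> t = \<one>" using int by auto
  moreover have "t = t' \<otimes> (inv t' \<otimes> t)" using tc by (simp add: m_assoc[symmetric])
  ultimately show "t' = t" using tc by simp
qed

lemma proj_props:
  assumes idp: "internal_direct_product G T I" and i: "i \<in> I"
  shows "\<And>x. x \<in> carrier G \<Longrightarrow> proj G T I i x \<in> T i"
    and "\<And>x y. x \<in> carrier G \<Longrightarrow> y \<in> carrier G \<Longrightarrow> proj G T I i (x \<otimes> y) = proj G T I i x \<otimes> proj G T I i y"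
    and "\<And>t. t \<in> T i \<Longrightarrow> proj G T I i t = t"
proof -
  let ?N = "generate G (\<Union>j\<in>I - {i}. T j)"
  have Tn: "\<And>j. j \<in> I \<Longrightarrow> T j \<lhd> G" using idp unfolding internal_direct_product_def by blast
  have Tsub: "\<And>j. j \<in> I \<Longrightarrow> T j \<subseteq> carrier G"
    using Tn normal_imp_subgroup subgroup.subset by blast
  have Nsub: "subgroup ?N G" using Tsub by (intro generate_is_subgroup) auto
  have TiS: "subgroup (T i) G" using Tn[OF i] normal_imp_subgroup by blast
  show "proj G T I i x \<in> T i" if x: "x \<in> carrier G" for x
    using idp_decomp[OF idp i x] proj_eq[OF idp i] by auto
  show "proj G T I i t = t" if t: "t \<in> T i" for t
  proof -
    have "t = t \<otimes> \<one>" using t Tsub[OF i] by auto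
    then show ?thesis using proj_eq[OF idp i t generate.one] by metis
  qed
  show "proj G T I i (x \<otimes> y) = proj G T I i x \<otimes> proj G T I i y"
    if x: "x \<in> carrier G" and y: "y \<in> carrier G" for x y
  proof -
    obtain t s where t: "t \<in> T i" and s: "s \<in> ?N" and xe: "x = t \<otimes> s" using idp_decomp[OF idp i x] by blast
    obtain t' s' where t': "t' \<in> T i" and s': "s' \<in> ?N" and ye: "y = t' \<otimes> s'" using idp_decomp[OF idp i y] by blast
    have tc: "t \<in> carrier G" "t' \<in> carrier G" using t t' Tsub[OF i] by auto
    have sc: "s \<in> carrier G" "s' \<in> carrier G" using s s' Nsub subgroup.subset by blast+
    have "x \<otimes> y = t \<otimes> (s \<otimes> t') \<otimes> s'" using xe ye tc sc by (simp add: m_assoc)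
    also have "\<dots> = t \<otimes> (t' \<otimes> s) \<otimes> s'" using idp_commute[OF idp i t' s] by simp
    also have "\<dots> = (t \<otimes> t') \<otimes> (s \<otimes> s')" using tc sc by (simp add: m_assoc)
    finally have "proj G T I i (x \<otimes> y) = t \<otimes> t'"
      using proj_eq[OF idp i subgroup.m_closed[OF TiS t t'] subgroup.m_closed[OF Nsub s s']] by simp
    moreover have "proj G T I i x = t" "proj G T I i y = t'" using proj_eq[OF idp i] t t' s s' xe ye by auto
    ultimately show ?thesis by simp
  qed
qed

end

theorem mainTheorem4:
  fixes \<Omega> :: "'a set" and G M :: "('a \<Rightarrow> 'a) set" and \<omega> :: 'a
    and k :: nat and T :: "nat \<Rightarrow> ('a \<Rightarrow> 'a) set" and \<K> :: "('a \<Rightarrow> 'a) set set"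
  assumes "finite \<Omega>"
    and "innately_transitive \<Omega> G"
    and "plinth \<Omega> G M"
    and "\<not> comm_group (subgrp \<Omega> M)"
    and "internal_direct_product (subgrp \<Omega> M) T {1..k}"
    and "\<forall>i\<in>{1..k}. simple_group (subgrp \<Omega> (T i)) \<and> \<not> comm_group (subgrp \<Omega> (T i))"
    and "\<forall>i\<in>{1..k}. \<forall>j\<in>{1..k}. subgrp \<Omega> (T i) \<cong> subgrp \<Omega> (T j)"
    and "\<omega> \<in> \<Omega>"
    and "cartesian_system \<Omega> G M \<omega> \<K>"
  shows "\<forall>i\<in>{1..k}. \<forall>K\<in>\<K>.
           T i = (proj (subgrp \<Omega> M) T {1..k} i ` K) <#>\<^bsub>BijGroup \<Omega>\<^esub>
                 (T i \<inter> \<Inter>{proj (subgrp \<Omega> M) T {1..k} i ` K' | K'. K' \<in> \<K> - {K}})"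
proof (intro ballI)
  fix i K assume i: "i \<in> {1..k}" and K: "K \<in> \<K>"
  let ?B = "BijGroup \<Omega>"
  let ?H = "subgrp \<Omega> M"
  let ?\<sigma> = "proj ?H T {1..k} i"
  have BG: "group ?B" by (rule group_BijGroup)
  have GB: "subgroup G ?B" using assms(2) unfolding innately_transitive_def perm_group_def by blast
  have "M \<lhd> subgrp \<Omega> G" using assms(3) unfolding plinth_def minimal_normal_def by blast
  then have "subgroup M (subgrp \<Omega> G)" by (rule normal_imp_subgroup)
  then have MB: "subgroup M ?B" using group.incl_subgroup[OF BG GB] by blast
  have HG: "group ?H" using group.subgroup_imp_group[OF BG MB] .
  note idp = assms(5)
  note P = group.proj_props[OF HG idp i]
  have Tin: "T i \<lhd> ?H" using idp i unfolding internal_direct_product_def by blast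
  have TS: "subgroup (T i) ?H" using normal_imp_subgroup[OF Tin] .
  have TM: "T i \<subseteq> M" using subgroup.subset[OF TS] by simp
  have cs: "cartesian_system \<Omega> G M \<omega> \<K>" by fact
  have KM: "K \<subseteq> M" using cs K unfolding cartesian_system_def using subgroup.subset by fastforce
  have cart: "K <#>\<^bsub>?B\<^esub> (M \<inter> \<Inter>(\<K> - {K})) = M" using cs K unfolding cartesian_system_def by blast
  have sig_in: "\<And>x. x \<in> M \<Longrightarrow> ?\<sigma> x \<in> T i" using P(1) by simp
  have sig_mult: "\<And>x y. x \<in> M \<Longrightarrow> y \<in> M \<Longrightarrow> ?\<sigma> (x \<otimes>\<^bsub>?B\<^esub> y) = ?\<sigma> x \<otimes>\<^bsub>?B\<^esub> ?\<sigma> y"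
    using P(2) by simp
  have sig_id: "\<And>t. t \<in> T i \<Longrightarrow> ?\<sigma> t = t" using P(3) by simp
  have Tmult: "\<And>x y. x \<in> T i \<Longrightarrow> y \<in> T i \<Longrightarrow> x \<otimes>\<^bsub>?B\<^esub> y \<in> T i"
    using subgroup.m_closed[OF TS] by simp
  show "T i = (?\<sigma> ` K) <#>\<^bsub>?B\<^esub> (T i \<inter> \<Inter>{?\<sigma> ` K' | K'. K' \<in> \<K> - {K}})"
  proof
    show "T i \<subseteq> (?\<sigma> ` K) <#>\<^bsub>?B\<^esub> (T i \<inter> \<Inter>{?\<sigma> ` K' | K'. K' \<in> \<K> - {K}})"
    proof
      fix t assume t: "t \<in> T i"
      then have "t \<in> K <#>\<^bsub>?B\<^esub> (M \<inter> \<Inter>(\<K> - {K}))" using cart TM by auto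
      then obtain a b where a: "a \<in> K" and b: "b \<in> M \<inter> \<Inter>(\<K> - {K})" and tab: "t = a \<otimes>\<^bsub>?B\<^esub> b"
        unfolding set_mult_def by blast
      have "t = ?\<sigma> a \<otimes>\<^bsub>?B\<^esub> ?\<sigma> b" using sig_id[OF t] sig_mult[of a b] a b KM tab by auto
      moreover have "?\<sigma> b \<in> T i \<inter> \<Inter>{?\<sigma> ` K' | K'. K' \<in> \<K> - {K}}" using b sig_in by blast
      ultimately show "t \<in> (?\<sigma> ` K) <#>\<^bsub>?B\<^esub> (T i \<inter> \<Inter>{?\<sigma> ` K' | K'. K' \<in> \<K> - {K}})"
        using a unfolding set_mult_def by blast
    qed
  next
    show "(?\<sigma> ` K) <#>\<^bsub>?B\<^esub> (T i \<inter> \<Inter>{?\<sigma> ` K' | K'. K' \<in> \<K> - {K}}) \<subseteq> T i"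
      unfolding set_mult_def using Tmult sig_in KM by blast
  qed
qed

end
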